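(* Let $S\subseteq\mathbb{R}^d$ be a finite set, let $p,q\in S$ and let $i\in[d]$ with $p_i\ne q_i$. Let $a_1,\dots,a_\ell>0$ be the lengths, listed in order from $p_i$ to $q_i$, of the consecutive intervals into which the segment between $p_i$ and $q_i$ is partitioned by the projections $\{x_i:x\in S\}$ lying in it. Define $$s_i=\frac{(\sum_{j=1}^\ell a_j)^2}{\sum_{j=1}^\ell a_j^2},\qquad \mathrm{sep}_i=\frac{\sum_{j=1}^\ell a_j^2\min(j,\ell+1-j)}{\sum_{j=1}^\ell a_j^2}.$$ Then $\mathrm{sep}_i\ge\dfrac{s_i}{8\big(1+\ln(2|S|/s_i)\big)}$. *)

theory Defs
  imports "HOL-Analysis.Analysis"
begin

definition seg_points :: "(real^'d) set \<Rightarrow> 'd \<Rightarrow> real^'d \<Rightarrow> real^'d \<Rightarrow> real list" where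
  "seg_points S i p q =
     (let L = sorted_list_of_set
                {t \<in> (\<lambda>x. x $ i) ` S. min (p $ i) (q $ i) \<le> t \<and> t \<le> max (p $ i) (q $ i)}
      in if p $ i \<le> q $ i then L else rev L)"

definition num_gaps :: "(real^'d) set \<Rightarrow> 'd \<Rightarrow> real^'d \<Rightarrow> real^'d \<Rightarrow> nat" where
  "num_gaps S i p q = length (seg_points S i p q) - 1"

text \<open>Length a_j (for 1 \<le> j \<le> ell) of the j-th interval, counted from p_i towards q_i.\<close>
definition gap :: "(real^'d) set \<Rightarrow> 'd \<Rightarrow> real^'d \<Rightarrow> real^'d \<Rightarrow> nat \<Rightarrow> real" where
  "gap S i p q j = \<bar>seg_points S i p q ! j - seg_points S i p q ! (j - 1)\<bar>"

definition s_param :: "(real^'d) set \<Rightarrow> 'd \<Rightarrow> real^'d \<Rightarrow> real^'d \<Rightarrow> real" where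
  "s_param S i p q =
     (\<Sum>j=1..num_gaps S i p q. gap S i p q j)^2 / (\<Sum>j=1..num_gaps S i p q. (gap S i p q j)^2)"

definition sep_param :: "(real^'d) set \<Rightarrow> 'd \<Rightarrow> real^'d \<Rightarrow> real^'d \<Rightarrow> real" where
  "sep_param S i p q =
     (\<Sum>j=1..num_gaps S i p q. (gap S i p q j)^2 * real (min j (num_gaps S i p q + 1 - j)))
       / (\<Sum>j=1..num_gaps S i p q. (gap S i p q j)^2)"

end

theory Submission
  imports Defs "HOL-Analysis.Analysis"
begin

lemma CS_weighted:
  fixes a v :: "nat \<Rightarrow> real"
  assumes "\<And>i. i \<in> I \<Longrightarrow> v i > 0"
  shows "(\<Sum>i\<in>I. a i)^2 \<le> (\<Sum>i\<in>I. (a i)^2 * v i) * (\<Sum>i\<in>I. 1 / v i)"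
proof -
  have "(\<Sum>i\<in>I. (a i * sqrt (v i)) * (1 / sqrt (v i)))^2
        \<le> (\<Sum>i\<in>I. (a i * sqrt (v i))^2) * (\<Sum>i\<in>I. (1 / sqrt (v i))^2)"
    by (rule Cauchy_Schwarz_ineq_sum)
  moreover have "(\<Sum>i\<in>I. (a i * sqrt (v i)) * (1 / sqrt (v i))) = (\<Sum>i\<in>I. a i)"
  proof (rule sum.cong[OF refl])
    fix i assume "i \<in> I" then have "v i > 0" by (rule assms)
    then show "a i * sqrt (v i) * (1 / sqrt (v i)) = a i" by simp
  qed
  moreover have "(\<Sum>i\<in>I. (a i * sqrt (v i))^2) = (\<Sum>i\<in>I. (a i)^2 * v i)"
  proof (rule sum.cong[OF refl])
    fix i assume "i \<in> I" then have "v i > 0" by (rule assms)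
    then show "(a i * sqrt (v i))^2 = (a i)^2 * v i" by (simp add: power_mult_distrib)
  qed
  moreover have "(\<Sum>i\<in>I. (1 / sqrt (v i))^2) = (\<Sum>i\<in>I. 1 / v i)"
  proof (rule sum.cong[OF refl])
    fix i assume "i \<in> I" then have "v i > 0" by (rule assms)
    then show "(1 / sqrt (v i))^2 = 1 / v i" by (simp add: power_divide)
  qed
  ultimately show ?thesis by simp
qed

lemma harm_ln:
  fixes m :: real
  assumes "m > 0"
  shows "(\<Sum>j=1..l. 1 / (real j + m)) \<le> ln (real l + m) - ln m"
proof (induction l)
  case 0 then show ?case by simp
next
  case (Suc l)
  have pos: "real l + m > 0" using assms by simp
  have "ln ((real l + m) / (real l + 1 + m)) \<le> (real l + m) / (real l + 1 + m) - 1"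
    by (rule ln_le_minus_one) (use pos in simp)
  also have "\<dots> = - 1 / (real l + 1 + m)" using pos by (simp add: field_simps)
  finally have "1 / (real (Suc l) + m) \<le> ln (real (Suc l) + m) - ln (real l + m)"
    using pos by (simp add: ln_div add_ac)
  then show ?case using Suc by simp
qed

lemma lin2: "(D::real) \<le> 8/3 * L \<Longrightarrow> T \<le> 2 * D \<Longrightarrow> T \<le> 16/3*L"
  by linarith

lemma abstract_bound:
  fixes a :: "nat \<Rightarrow> real" and l n :: nat
  assumes nonneg: "\<And>j. a j \<ge> 0" and ln_le: "l \<le> n"
  defines "Q \<equiv> (\<Sum>j=1..l. (a j)^2)"
  shows "(\<Sum>j=1..l. (a j)^2 * real (min j (l + 1 - j))) / Q \<ge>
     ((\<Sum>j=1..l. a j)^2 / Q) / (8 * (1 + ln (2 * real n / ((\<Sum>j=1..l. a j)^2 / Q))))"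
proof (cases "Q = 0")
  case True then show ?thesis by simp
next
  case False
  define A where "A = (\<Sum>j=1..l. a j)"
  define W where "W = (\<Sum>j=1..l. (a j)^2 * real (min j (l + 1 - j)))"
  define s where "s = A^2 / Q"
  have Qpos: "Q > 0" using False unfolding Q_def by (metis sum_nonneg zero_le_power2 order_le_less)
  have Apos: "A > 0"
  proof -
    obtain j where j: "j \<in> {1..l}" "a j \<noteq> 0" using False unfolding Q_def
      by (metis (mono_tags, lifting) power_zero_numeral sum.neutral)
    have "a j \<le> A" unfolding A_def by (rule member_le_sum) (use j nonneg in auto)
    with j nonneg[of j] show ?thesis by linarith
  qed
  have spos: "s > 0" unfolding s_def using Apos Qpos by simp
  have "A^2 \<le> Q * (\<Sum>j=1..l. 1 / 1)"
    using CS_weighted[of "{1..l}" "\<lambda>_. 1" a] unfolding A_def Q_def by simp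
  then have "A^2 \<le> Q * real l" by simp
  then have sl: "s \<le> real l" unfolding s_def using Qpos by (simp add: field_simps)
  have sn: "s \<le> real n" using sl ln_le by linarith
  define x where "x = 2 * real n / s"
  have x2: "x \<ge> 2" unfolding x_def using sn spos by (simp add: field_simps)
  define L where "L = 1 + ln x"
  have lnx: "ln x \<ge> ln 2" using x2 by simp
  have ln2: "ln (2::real) > 0" by simp
  have Lpos: "L > 0" unfolding L_def using lnx ln2 by linarith
  have Lx: "L \<le> x" unfolding L_def using ln_le_minus_one[of x] x2 by linarith
  define m where "m = s / (16 * L)"
  have mpos: "m > 0" unfolding m_def using spos Lpos by simp
  define w where "w = (\<lambda>j::nat. real (min j (l + 1 - j)))"
  define T where "T = (\<Sum>j=1..l. 1 / (w j + m))"
  have CS: "A^2 \<le> (\<Sum>j=1..l. (a j)^2 * (w j + m)) * T"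
    unfolding A_def T_def by (rule CS_weighted) (use mpos in \<open>auto simp: w_def\<close>)
  have "(\<Sum>j=1..l. (a j)^2 * (w j + m)) = W + m * Q"
    unfolding W_def Q_def w_def by (simp add: algebra_simps sum.distrib sum_distrib_left)
  note CS = CS[unfolded this]
  have "T \<le> (\<Sum>j=1..l. 1 / (real j + m) + 1 / (real (l + 1 - j) + m))"
    unfolding T_def
  proof (rule sum_mono)
    fix j assume "j \<in> {1..l}"
    have a: "1 / (w j + m) \<le> 1 / (real j + m) \<or> 1 / (w j + m) \<le> 1 / (real (l + 1 - j) + m)"
      unfolding w_def by (cases "j \<le> l + 1 - j") (auto simp: min_def)
    have "1 / (real j + m) > 0" "1 / (real (l + 1 - j) + m) > 0" using mpos by auto
    with a show "1 / (w j + m) \<le> 1 / (real j + m) + 1 / (real (l + 1 - j) + m)" by linarith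
  qed
  also have "\<dots> = (\<Sum>j=1..l. 1 / (real j + m)) + (\<Sum>j=1..l. 1 / (real (l + 1 - j) + m))"
    by (simp add: sum.distrib)
  also have "(\<Sum>j=1..l. 1 / (real (l + 1 - j) + m)) = (\<Sum>j=1..l. 1 / (real j + m))"
    using sum.atLeastAtMost_rev[of "\<lambda>j. 1 / (real j + m)" 1 l] by simp
  finally have T0: "T \<le> (\<Sum>j=1..l. 1 / (real j + m)) + (\<Sum>j=1..l. 1 / (real j + m))" .
  have H: "(\<Sum>j=1..l. 1 / (real j + m)) \<le> ln (real l + m) - ln m" by (rule harm_ln[OF mpos])
  have T1: "T \<le> 2 * (ln (real l + m) - ln m)"
  proof -
    define HH where "HH = (\<Sum>j=1..l. 1 / (real j + m))"
    have "T \<le> HH + HH" using T0 unfolding HH_def .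
    moreover have "HH \<le> ln (real l + m) - ln m" using H unfolding HH_def .
    ultimately have "T \<le> (ln (real l + m) - ln m) + (ln (real l + m) - ln m)" by linarith
    then show ?thesis by simp
  qed
  have "ln (real l + m) - ln m = ln (1 + real l / m)"
  proof -
    have "1 + real l / m = (real l + m) / m" using mpos by (simp add: field_simps)
    then show ?thesis using mpos by (simp add: ln_div)
  qed
  also have "\<dots> \<le> ln (1 + real n / m)"
  proof -
    have "real l / m \<le> real n / m" using mpos ln_le by (simp add: divide_right_mono)
    moreover have "real l / m \<ge> 0" using mpos by simp
    ultimately show ?thesis by simp
  qed
  also have "real n / m = 8 * x * L"
    unfolding m_def x_def using spos Lpos by (simp add: field_simps)
  also have "ln (1 + 8 * x * L) \<le> ln (9 * x^2)"
  proof -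
    have "8 * x * L \<le> 8 * x * x" using Lx x2 by simp
    moreover have "1 \<le> x * x" using x2 mult_mono[of 2 x 2 x] by simp
    ultimately have "1 + 8 * x * L \<le> 9 * x^2" by (simp add: power2_eq_square)
    moreover have "0 < 1 + 8 * x * L" using Lpos x2 by (simp add: add_pos_pos)
    ultimately show ?thesis by (metis ln_le_cancel_iff order_less_le_trans)
  qed
  also have "ln (9 * x^2) = ln 9 + 2 * ln x" using x2 by (simp add: ln_mult ln_realpow)
  also have "\<dots> \<le> 8 / 3 * L"
  proof -
    have "ln (9::real) \<le> ln 16" by simp
    also have "ln (16::real) = 4 * ln 2"
      using ln_realpow[of 2 4] by simp
    finally have "ln (9::real) \<le> 4 * ln 2" .
    moreover have "8 / 3 * L = 8 / 3 + 8 / 3 * ln x" unfolding L_def by (simp add: algebra_simps)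
    ultimately show ?thesis using ln2_le_25_over_36 lnx by linarith
  qed
  finally have T2: "T \<le> 16 / 3 * L" using T1 by (rule lin2)
  have "s \<le> (W / Q + m) * T"
  proof -
    have "A^2 \<le> (W + m * Q) * T" by (rule CS)
    then have "A^2 / Q \<le> (W + m * Q) * T / Q" using Qpos by (simp add: divide_right_mono)
    also have "\<dots> = (W / Q + m) * T" using Qpos by (simp add: field_simps)
    finally show ?thesis unfolding s_def .
  qed
  also have "\<dots> \<le> (W / Q + m) * (16 / 3 * L)"
    using T2 mpos Qpos by (intro mult_left_mono) (auto simp: W_def intro!: sum_nonneg divide_nonneg_pos add_nonneg_nonneg)
  finally have key: "s \<le> (W / Q + m) * (16 / 3 * L)" .
  have "s / (8 * L) \<le> W / Q"
  proof -
    have "3 * s / (16 * L) \<le> W / Q + m" using key Lpos by (simp add: field_simps)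
    then have "3 * s / (16 * L) - s / (16 * L) \<le> W / Q" unfolding m_def by linarith
    moreover have "3 * s / (16 * L) - s / (16 * L) = s / (8 * L)" using Lpos by (simp add: field_simps)
    ultimately show ?thesis by simp
  qed
  then show ?thesis unfolding W_def s_def A_def L_def x_def by simp
qed

theorem lemmaC1:
  fixes S :: "(real^'d) set" and p q :: "real^'d" and i :: 'd
  assumes "finite S" and "p \<in> S" and "q \<in> S" and "p $ i \<noteq> q $ i"
  shows "sep_param S i p q \<ge>
           s_param S i p q / (8 * (1 + ln (2 * real (card S) / s_param S i p q)))"
proof -
  define F where "F = {t \<in> (\<lambda>x. x $ i) ` S. min (p $ i) (q $ i) \<le> t \<and> t \<le> max (p $ i) (q $ i)}"
  have finF: "finite F" unfolding F_def using assms(1) by simp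
  have "length (seg_points S i p q) = card F"
    unfolding seg_points_def F_def[symmetric] Let_def using finF by simp
  also have "card F \<le> card ((\<lambda>x. x $ i) ` S)"
    unfolding F_def by (rule card_mono) (use assms(1) in auto)
  also have "\<dots> \<le> card S" using assms(1) by (rule card_image_le)
  finally have le: "num_gaps S i p q \<le> card S" unfolding num_gaps_def by simp
  have nn: "\<And>j. gap S i p q j \<ge> 0" by (simp add: gap_def)
  show ?thesis
    unfolding sep_param_def s_param_def
    by (rule abstract_bound[OF nn le])
qed

end
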